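(* Let $G$ and $H$ be fully supported graphs with no self-loops. Then $G$ and $H$ are strongly disjoint if and only if they are weakly disjoint and exactly one of the two graphs is a forest.
   Context: A weight function on finite $U$ is $\alpha:U\times U\to\mathbb{R}$, $\alpha\ge0$, symmetric, summing to $1$; degree $p(u)=\sum_{u'}\alpha(u,u')$. A graph is $G=(U,\alpha)$ with edges $(u,u')$ where $\alpha(u,u')>0$; a self-loop is an edge $(u,u)$; $G$ is fully supported if $p(u)>0$ for all $u$; a forest is a graph with no cycles (as an undirected graph). For graphs $(U,\alpha)$, $(V,\beta)$ with degrees $p,q$, a weight joining is a weight function $\gamma$ on $U\times V$ with degree $r(u,v)=\sum_{(u',v')}\gamma((u,v),(u',v'))$ such that $\sum_v r(u,v)=p(u)$, $\sum_u r(u,v)=q(v)$, $p(u)\sum_{\tilde v}\gamma((u,v),(u',\tilde v))=\alpha(u,u')r(u,v)$ and $q(v)\sum_{\tilde u}\gamma((u,v),(\tilde u,v'))=\beta(v,v')r(u,v)$ for all $u,u',v,v'$. The graphs are strongly disjoint if the only weight joining is $\alpha\otimes\beta$, $(\alpha\otimes\beta)((u,v),(u',v'))=\alpha(u,u')\beta(v,v')$; weakly disjoint if every weight joining has degree $r(u,v)=p(u)q(v)$. *)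

theory Defs
  imports Complex_Main
begin

text \<open>Weight functions on a finite vertex type (the finite set U is the universe of a
finite type).\<close>

definition weight_fun :: "('a::finite \<Rightarrow> 'a \<Rightarrow> real) \<Rightarrow> bool" where
  "weight_fun \<alpha> \<longleftrightarrow> (\<forall>u u'. \<alpha> u u' \<ge> 0) \<and> (\<forall>u u'. \<alpha> u u' = \<alpha> u' u)
     \<and> (\<Sum>u\<in>UNIV. \<Sum>u'\<in>UNIV. \<alpha> u u') = 1"

definition deg :: "('a::finite \<Rightarrow> 'a \<Rightarrow> real) \<Rightarrow> 'a \<Rightarrow> real" where
  "deg \<alpha> u = (\<Sum>u'\<in>UNIV. \<alpha> u u')"

definition fully_supported :: "('a::finite \<Rightarrow> 'a \<Rightarrow> real) \<Rightarrow> bool" where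
  "fully_supported \<alpha> \<longleftrightarrow> (\<forall>u. deg \<alpha> u > 0)"

definition no_self_loops :: "('a \<Rightarrow> 'a \<Rightarrow> real) \<Rightarrow> bool" where
  "no_self_loops \<alpha> \<longleftrightarrow> (\<forall>u. \<not> \<alpha> u u > 0)"

definition has_cycle :: "('a \<Rightarrow> 'a \<Rightarrow> real) \<Rightarrow> bool" where
  "has_cycle \<alpha> \<longleftrightarrow> (\<exists>u. \<alpha> u u > 0) \<or>
     (\<exists>vs. length vs \<ge> 3 \<and> distinct vs \<and>
        (\<forall>i<length vs. \<alpha> (vs ! i) (vs ! ((i + 1) mod length vs)) > 0))"

definition forest :: "('a \<Rightarrow> 'a \<Rightarrow> real) \<Rightarrow> bool" where
  "forest \<alpha> \<longleftrightarrow> \<not> has_cycle \<alpha>"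

definition tensor ::
  "('a \<Rightarrow> 'a \<Rightarrow> real) \<Rightarrow> ('b \<Rightarrow> 'b \<Rightarrow> real) \<Rightarrow> ('a \<times> 'b) \<Rightarrow> ('a \<times> 'b) \<Rightarrow> real" where
  "tensor \<alpha> \<beta> x y = \<alpha> (fst x) (fst y) * \<beta> (snd x) (snd y)"

definition weight_joining ::
  "('a::finite \<Rightarrow> 'a \<Rightarrow> real) \<Rightarrow> ('b::finite \<Rightarrow> 'b \<Rightarrow> real)
     \<Rightarrow> ('a \<times> 'b \<Rightarrow> 'a \<times> 'b \<Rightarrow> real) \<Rightarrow> bool" where
  "weight_joining \<alpha> \<beta> \<gamma> \<longleftrightarrow> weight_fun \<gamma> \<and>
     (\<forall>u. (\<Sum>v\<in>UNIV. deg \<gamma> (u, v)) = deg \<alpha> u) \<and>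
     (\<forall>v. (\<Sum>u\<in>UNIV. deg \<gamma> (u, v)) = deg \<beta> v) \<and>
     (\<forall>u u' v. deg \<alpha> u * (\<Sum>v'\<in>UNIV. \<gamma> (u, v) (u', v')) = \<alpha> u u' * deg \<gamma> (u, v)) \<and>
     (\<forall>u v v'. deg \<beta> v * (\<Sum>u'\<in>UNIV. \<gamma> (u, v) (u', v')) = \<beta> v v' * deg \<gamma> (u, v))"

definition strongly_disjoint ::
  "('a::finite \<Rightarrow> 'a \<Rightarrow> real) \<Rightarrow> ('b::finite \<Rightarrow> 'b \<Rightarrow> real) \<Rightarrow> bool" where
  "strongly_disjoint \<alpha> \<beta> \<longleftrightarrow> (\<forall>\<gamma>. weight_joining \<alpha> \<beta> \<gamma> \<longrightarrow> \<gamma> = tensor \<alpha> \<beta>)"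

definition weakly_disjoint ::
  "('a::finite \<Rightarrow> 'a \<Rightarrow> real) \<Rightarrow> ('b::finite \<Rightarrow> 'b \<Rightarrow> real) \<Rightarrow> bool" where
  "weakly_disjoint \<alpha> \<beta> \<longleftrightarrow> (\<forall>\<gamma>. weight_joining \<alpha> \<beta> \<gamma> \<longrightarrow>
     (\<forall>u v. deg \<gamma> (u, v) = deg \<alpha> u * deg \<beta> v))"

end

theory Submission
  imports Defs
begin


definition cycE :: "('a \<Rightarrow> 'a \<Rightarrow> bool) \<Rightarrow> 'a list \<Rightarrow> bool" where
  "cycE E vs \<longleftrightarrow> length vs \<ge> 3 \<and> distinct vs \<and>
     (\<forall>i<length vs. E (vs ! i) (vs ! ((i + 1) mod length vs)))"

lemma cycE_mono: "cycE E vs \<Longrightarrow> (\<And>x y. E x y \<Longrightarrow> F x y) \<Longrightarrow> cycE F vs"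
  unfolding cycE_def by blast

lemma cycle_exists:
  fixes E :: "'a::finite \<Rightarrow> 'a \<Rightarrow> bool"
  assumes irr: "\<forall>x. \<not> E x x"
    and two: "\<forall>x y. E y x \<longrightarrow> (\<exists>z. E x z \<and> z \<noteq> y)"
    and e: "E a b"
  shows "\<exists>vs. cycE E vs"
proof -
  define s where "s = rec_nat (a,b) (\<lambda>_ p. (snd p, SOME z. E (snd p) z \<and> z \<noteq> fst p))"
  have s0: "s 0 = (a,b)" by (simp add: s_def)
  have sS: "s (Suc n) = (snd (s n), SOME z. E (snd (s n)) z \<and> z \<noteq> fst (s n))" for n
    by (simp add: s_def)
  have inv: "E (fst (s n)) (snd (s n))" for n
  proof (induction n)
    case 0 then show ?case using e s0 by simp
  next
    case (Suc n)
    then have "\<exists>z. E (snd (s n)) z \<and> z \<noteq> fst (s n)" using two by blast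
    then have "E (snd (s n)) (SOME z. E (snd (s n)) z \<and> z \<noteq> fst (s n))
       \<and> (SOME z. E (snd (s n)) z \<and> z \<noteq> fst (s n)) \<noteq> fst (s n)" by (rule someI_ex)
    then show ?case by (simp add: sS)
  qed
  have nb: "snd (s (Suc n)) \<noteq> fst (s n)" for n
  proof -
    have "\<exists>z. E (snd (s n)) z \<and> z \<noteq> fst (s n)" using two inv by blast
    then have "E (snd (s n)) (SOME z. E (snd (s n)) z \<and> z \<noteq> fst (s n))
       \<and> (SOME z. E (snd (s n)) z \<and> z \<noteq> fst (s n)) \<noteq> fst (s n)" by (rule someI_ex)
    then show ?thesis by (simp add: sS)
  qed
  define x where "x n = fst (s n)" for n
  have xS: "x (Suc n) = snd (s n)" for n by (simp add: x_def sS)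
  have xE: "E (x n) (x (Suc n))" for n using inv xS x_def by simp
  have x2: "x (Suc (Suc n)) \<noteq> x n" for n using nb xS x_def by simp
  have x1: "x (Suc n) \<noteq> x n" for n using xE[of n] irr by auto
  have "\<not> inj x"
  proof
    assume "inj x"
    then have "finite (UNIV :: nat set)"
      using finite_imageD[of x UNIV] by simp
    then show False by simp
  qed
  then obtain i j where ij: "x i = x j" "i \<noteq> j" unfolding inj_def by blast
  have ex: "\<exists>j. \<exists>i<j. x i = x j"
  proof (cases "i < j")
    case True then show ?thesis using ij by blast
  next
    case False then have "j < i" using ij by simp
    then show ?thesis using ij by metis
  qed
  define J where "J = (LEAST j. \<exists>i<j. x i = x j)"
  have "\<exists>i<J. x i = x J" unfolding J_def using ex by (rule LeastI_ex)
  then obtain I where IJ: "I < J" "x I = x J" by blast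
  have mini: "x i \<noteq> x j" if "i < j" "j < J" for i j
    using not_less_Least[of j "\<lambda>j. \<exists>i<j. x i = x j"] that unfolding J_def by blast
  define vs where "vs = map x [I..<J]"
  have len: "length vs = J - I" by (simp add: vs_def)
  have nth: "k < J - I \<Longrightarrow> vs ! k = x (I + k)" for k by (simp add: vs_def)
  have "J \<noteq> Suc I" using x1[of I] IJ by auto
  moreover have "J \<noteq> Suc (Suc I)" using x2[of I] IJ by auto
  ultimately have len3: "J - I \<ge> 3" using IJ by linarith
  have dist: "distinct vs"
    unfolding distinct_conv_nth len
  proof (intro allI impI)
    fix i j assume "i < J - I" "j < J - I" "i \<noteq> j"
    then have "I + i < J" "I + j < J" "I + i \<noteq> I + j" by auto
    then have "x (I + i) \<noteq> x (I + j)" using mini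
      by (metis linorder_neqE_nat)
    then show "vs ! i \<noteq> vs ! j" using nth \<open>i < J - I\<close> \<open>j < J - I\<close> by simp
  qed
  have edges: "\<forall>k<length vs. E (vs ! k) (vs ! ((k + 1) mod length vs))"
  proof (intro allI impI)
    fix k assume k: "k < length vs"
    have "vs ! ((k + 1) mod length vs) = x (I + Suc k)"
    proof (cases "k + 1 < J - I")
      case True
      then have "(k + 1) mod length vs = k + 1" using len by simp
      moreover have "vs ! (k + 1) = x (I + (k + 1))" using nth[of "k+1"] True by blast
      ultimately show ?thesis by simp
    next
      case False
      then have kk: "k + 1 = J - I" using k len by simp
      then have "(k + 1) mod length vs = 0" using len by simp
      moreover have "vs ! 0 = x I" using nth[of 0] len3 by simp
      moreover have "I + Suc k = J" using kk IJ(1) by simp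
      ultimately show ?thesis using IJ(2) by simp
    qed
    moreover have "vs ! k = x (I + k)" using nth k len by simp
    ultimately show "E (vs ! k) (vs ! ((k + 1) mod length vs))" using xE[of "I + k"] by simp
  qed
  have "cycE E vs" unfolding cycE_def using len3 dist edges by (simp add: len)
  then show ?thesis by blast
qed

lemma leaf:
  fixes E :: "'a::finite \<Rightarrow> 'a \<Rightarrow> bool"
  assumes irr: "\<forall>x. \<not> E x x" and sym: "\<forall>x y. E x y \<longrightarrow> E y x"
    and nocyc: "\<not> (\<exists>vs. cycE E vs)" and e: "E a b"
  shows "\<exists>x y. E x y \<and> (\<forall>z. E x z \<longrightarrow> z = y)"
proof (rule ccontr)
  assume "\<not> ?thesis"
  then have "\<forall>x y. E y x \<longrightarrow> (\<exists>z. E x z \<and> z \<noteq> y)" using sym by blast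
  then show False using cycle_exists[of E a b] irr e nocyc by blast
qed

lemma coloring:
  fixes E :: "'a::finite \<Rightarrow> 'a \<Rightarrow> bool"
  assumes "\<forall>x. \<not> E x x" and "\<forall>x y. E x y \<longrightarrow> E y x"
    and "\<not> (\<exists>vs. cycE E vs)"
  shows "\<exists>c::'a \<Rightarrow> bool. \<forall>x y. E x y \<longrightarrow> c x \<noteq> c y"
  using assms
proof (induction "card {p. E (fst p) (snd p)}" arbitrary: E rule: less_induct)
  case less
  show ?case
  proof (cases "\<exists>a b. E a b")
    case False then show ?thesis by blast
  next
    case True
    then obtain a b where "E a b" by blast
    from leaf[OF less.prems this] obtain x y where xy: "E x y" and lf: "\<forall>z. E x z \<longrightarrow> z = y"
      by blast
    define E' where "E' = (\<lambda>u w. E u w \<and> \<not> ((u = x \<and> w = y) \<or> (u = y \<and> w = x)))"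
    have sub: "{p. E' (fst p) (snd p)} \<subset> {p. E (fst p) (snd p)}"
    proof -
      have "(x,y) \<in> {p. E (fst p) (snd p)}" "(x,y) \<notin> {p. E' (fst p) (snd p)}"
        using xy unfolding E'_def by auto
      moreover have "{p. E' (fst p) (snd p)} \<subseteq> {p. E (fst p) (snd p)}"
        unfolding E'_def by blast
      ultimately show ?thesis by blast
    qed
    have lt: "card {p. E' (fst p) (snd p)} < card {p. E (fst p) (snd p)}"
      by (rule psubset_card_mono[OF _ sub]) simp
    have i1: "\<forall>x. \<not> E' x x" using less.prems(1) unfolding E'_def by simp
    have i2: "\<forall>u w. E' u w \<longrightarrow> E' w u" using less.prems(2) unfolding E'_def by blast
    have i3: "\<not> (\<exists>vs. cycE E' vs)"
    proof
      assume "\<exists>vs. cycE E' vs"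
      then obtain vs where "cycE E' vs" by blast
      then have "cycE E vs" by (rule cycE_mono) (simp add: E'_def)
      then show False using less.prems(3) by blast
    qed
    obtain c' :: "'a \<Rightarrow> bool" where c': "\<forall>u w. E' u w \<longrightarrow> c' u \<noteq> c' w"
      using less.hyps[OF lt i1 i2 i3] by blast
    have yx: "y \<noteq> x" using xy less.prems(1) by blast
    define c where "c = c'(x := \<not> c' y)"
    have "\<forall>u w. E u w \<longrightarrow> c u \<noteq> c w"
    proof (intro allI impI)
      fix u w assume uw: "E u w"
      show "c u \<noteq> c w"
      proof (cases "u = x \<or> w = x")
        case True
        then have "(u = x \<and> w = y) \<or> (w = x \<and> u = y)"
          using lf uw less.prems(2) by blast
        then show ?thesis using yx unfolding c_def by auto
      next
        case False
        then have "E' u w" using uw unfolding E'_def by blast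
        then show ?thesis using c' False unfolding c_def by auto
      qed
    qed
    then show ?thesis by blast
  qed
qed

lemma forest_zero:
  fixes \<alpha> :: "'a::finite \<Rightarrow> 'a \<Rightarrow> real" and D :: "'a \<Rightarrow> 'a \<Rightarrow> 'c \<Rightarrow> real"
  assumes nsl: "\<forall>u. \<not> \<alpha> u u > 0"
    and nocyc: "\<not> (\<exists>vs. cycE (\<lambda>u w. \<alpha> u w > 0) vs)"
    and supp: "\<forall>u w c. \<not> \<alpha> u w > 0 \<longrightarrow> D u w c = 0"
    and sym: "\<forall>u w c. D u w c \<noteq> 0 \<longrightarrow> (\<exists>c'. D w u c' \<noteq> 0)"
    and sums: "\<forall>u c. (\<Sum>w\<in>UNIV. D u w c) = 0"
  shows "D u w c = 0"
proof (rule ccontr)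
  assume nz: "D u w c \<noteq> 0"
  define E where "E = (\<lambda>u w. \<exists>c. D u w c \<noteq> 0)"
  have EA: "E x y \<Longrightarrow> \<alpha> x y > 0" for x y using supp unfolding E_def by blast
  have irr: "\<forall>x. \<not> E x x" using EA nsl by metis
  have two: "\<forall>x y. E y x \<longrightarrow> (\<exists>z. E x z \<and> z \<noteq> y)"
  proof (intro allI impI)
    fix x y assume "E y x"
    then obtain c where c: "D x y c \<noteq> 0" using sym unfolding E_def by blast
    show "\<exists>z. E x z \<and> z \<noteq> y"
    proof (rule ccontr)
      assume "\<not> ?thesis"
      then have "\<forall>z. z \<noteq> y \<longrightarrow> D x z c = 0" unfolding E_def by blast
      then have "(\<Sum>w\<in>UNIV. D x w c) = (\<Sum>w\<in>UNIV. if w = y then D x y c else 0)"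
        by (intro sum.cong) auto
      also have "\<dots> = D x y c" by simp
      finally show False using sums c by simp
    qed
  qed
  have "E u w" using nz unfolding E_def by blast
  from cycle_exists[OF irr two this] obtain vs where "cycE E vs" by blast
  then have "cycE (\<lambda>u w. \<alpha> u w > 0) vs" by (rule cycE_mono) (rule EA)
  then show False using nocyc by blast
qed



lemma sumP: "(\<Sum>x\<in>(UNIV::('a::finite\<times>'b::finite) set). f x) = (\<Sum>u\<in>UNIV. \<Sum>v\<in>UNIV. f (u,v))"
  by (simp add: sum.cartesian_product UNIV_Times_UNIV[symmetric] del: UNIV_Times_UNIV)

lemma wf_nonneg: "weight_fun \<alpha> \<Longrightarrow> \<alpha> u w \<ge> 0" by (simp add: weight_fun_def)
lemma wf_sym: "weight_fun \<alpha> \<Longrightarrow> \<alpha> u w = \<alpha> w u" by (simp add: weight_fun_def)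
lemma wf_deg_sum: "weight_fun \<alpha> \<Longrightarrow> (\<Sum>u\<in>UNIV. deg \<alpha> u) = 1"
  by (simp add: weight_fun_def deg_def)

lemma deg_tensor: "deg (tensor \<alpha> \<beta>) (u,v) = deg \<alpha> u * deg \<beta> v"
  unfolding deg_def tensor_def by (simp add: sumP sum_product)

lemma strong_weak:
  assumes "strongly_disjoint \<alpha> \<beta>" shows "weakly_disjoint \<alpha> \<beta>"
  unfolding weakly_disjoint_def
proof (intro allI impI)
  fix \<gamma> u v assume "weight_joining \<alpha> \<beta> \<gamma>"
  then have "\<gamma> = tensor \<alpha> \<beta>" using assms unfolding strongly_disjoint_def by blast
  then show "deg \<gamma> (u, v) = deg \<alpha> u * deg \<beta> v" by (simp add: deg_tensor)
qed

lemma wf_edge: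
  fixes \<alpha> :: "'a::finite \<Rightarrow> 'a \<Rightarrow> real"
  assumes "weight_fun \<alpha>" shows "\<exists>u w. \<alpha> u w > 0"
proof (rule ccontr)
  assume "\<not> ?thesis"
  then have "\<alpha> u w = 0" for u w using wf_nonneg[OF assms, of u w] by (meson not_less order_antisym)
  then show False using assms by (simp add: weight_fun_def)
qed

lemma perturb_joining:
  fixes \<alpha> :: "'a::finite \<Rightarrow> 'a \<Rightarrow> real" and \<beta> :: "'b::finite \<Rightarrow> 'b \<Rightarrow> real"
  assumes wa: "weight_fun \<alpha>" and wb: "weight_fun \<beta>"
    and nn: "\<forall>x y. tensor \<alpha> \<beta> x y + \<epsilon> * \<delta> x y \<ge> 0"
    and sd: "\<forall>x y. \<delta> x y = \<delta> y x"
    and s1: "\<forall>u v u'. (\<Sum>v'\<in>UNIV. \<delta> (u,v) (u',v')) = 0"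
    and s2: "\<forall>u v v'. (\<Sum>u'\<in>UNIV. \<delta> (u,v) (u',v')) = 0"
  shows "weight_joining \<alpha> \<beta> (\<lambda>x y. tensor \<alpha> \<beta> x y + \<epsilon> * \<delta> x y)"
proof -
  define \<gamma> where "\<gamma> = (\<lambda>x y. tensor \<alpha> \<beta> x y + \<epsilon> * \<delta> x y)"
  have rowv: "(\<Sum>v'\<in>UNIV. \<gamma> (u,v) (u',v')) = \<alpha> u u' * deg \<beta> v" for u v u'
  proof -
    have "(\<Sum>v'\<in>UNIV. \<gamma> (u,v) (u',v')) = (\<Sum>v'\<in>UNIV. \<alpha> u u' * \<beta> v v') + \<epsilon> * (\<Sum>v'\<in>UNIV. \<delta> (u,v) (u',v'))"
      unfolding \<gamma>_def tensor_def by (simp add: sum.distrib sum_distrib_left)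
    then show ?thesis using s1 by (simp add: deg_def sum_distrib_left)
  qed
  have rowu: "(\<Sum>u'\<in>UNIV. \<gamma> (u,v) (u',v')) = deg \<alpha> u * \<beta> v v'" for u v v'
  proof -
    have "(\<Sum>u'\<in>UNIV. \<gamma> (u,v) (u',v')) = (\<Sum>u'\<in>UNIV. \<alpha> u u' * \<beta> v v') + \<epsilon> * (\<Sum>u'\<in>UNIV. \<delta> (u,v) (u',v'))"
      unfolding \<gamma>_def tensor_def by (simp add: sum.distrib sum_distrib_left)
    then show ?thesis using s2 by (simp add: deg_def sum_distrib_right)
  qed
  have dg: "deg \<gamma> (u,v) = deg \<alpha> u * deg \<beta> v" for u v
  proof -
    have "deg \<gamma> (u,v) = (\<Sum>u'\<in>UNIV. \<Sum>v'\<in>UNIV. \<gamma> (u,v) (u',v'))"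
      by (simp add: deg_def sumP)
    also have "\<dots> = (\<Sum>u'\<in>UNIV. \<alpha> u u' * deg \<beta> v)" by (simp add: rowv)
    also have "\<dots> = deg \<alpha> u * deg \<beta> v" by (simp add: deg_def sum_distrib_right)
    finally show ?thesis .
  qed
  have wg: "weight_fun \<gamma>"
    unfolding weight_fun_def
  proof (intro conjI allI)
    fix x y show "\<gamma> x y \<ge> 0" using nn unfolding \<gamma>_def by blast
  next
    fix x y show "\<gamma> x y = \<gamma> y x"
      using sd[rule_format, of x y] wf_sym[OF wa] wf_sym[OF wb] by (simp add: \<gamma>_def tensor_def)
  next
    have "(\<Sum>x\<in>UNIV. \<Sum>y\<in>UNIV. \<gamma> x y) = (\<Sum>x\<in>UNIV. deg \<gamma> x)" by (simp add: deg_def)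
    also have "\<dots> = (\<Sum>u\<in>UNIV. \<Sum>v\<in>UNIV. deg \<alpha> u * deg \<beta> v)" by (simp add: sumP dg)
    also have "\<dots> = 1" using wf_deg_sum[OF wa] wf_deg_sum[OF wb]
      by (simp add: sum_product[symmetric])
    finally show "(\<Sum>x\<in>UNIV. \<Sum>y\<in>UNIV. \<gamma> x y) = 1" .
  qed
  have "weight_joining \<alpha> \<beta> \<gamma>"
    unfolding weight_joining_def
    using wg wf_deg_sum[OF wa] wf_deg_sum[OF wb]
    by (simp add: dg rowv rowu sum_distrib_left[symmetric] sum_distrib_right[symmetric])
  then show ?thesis by (simp add: \<gamma>_def)
qed

lemma half:
  fixes \<beta> :: "'b::finite \<Rightarrow> 'b \<Rightarrow> real" and d :: "'b \<Rightarrow> bool"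
  assumes wb: "weight_fun \<beta>" and d: "\<forall>v w. \<beta> v w > 0 \<longrightarrow> d v \<noteq> d w"
  shows "(\<Sum>v\<in>UNIV. if d v = b then deg \<beta> v else 0) = 1/2"
proof -
  define A where "A b = (\<Sum>v\<in>UNIV. if d v = b then deg \<beta> v else 0)" for b
  have pt: "(if d v = b then \<beta> v w else 0) = (if d w = (\<not> b) then \<beta> v w else 0)" for v w b
  proof (cases "\<beta> v w > 0")
    case True then show ?thesis using d by auto
  next
    case False then have "\<beta> v w = 0" using wf_nonneg[OF wb, of v w] by simp
    then show ?thesis by simp
  qed
  have ex: "(if d v = b then deg \<beta> v else 0) = (\<Sum>w\<in>UNIV. if d v = b then \<beta> v w else 0)" for v b
    by (cases "d v = b") (simp_all add: deg_def)
  have eq: "A b = A (\<not> b)" for b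
  proof -
    have "A b = (\<Sum>v\<in>UNIV. \<Sum>w\<in>UNIV. if d v = b then \<beta> v w else 0)"
      unfolding A_def using ex by simp
    also have "\<dots> = (\<Sum>v\<in>UNIV. \<Sum>w\<in>UNIV. if d w = (\<not> b) then \<beta> v w else 0)"
      using pt by simp
    also have "\<dots> = (\<Sum>w\<in>UNIV. \<Sum>v\<in>UNIV. if d w = (\<not> b) then \<beta> v w else 0)"
      by (rule sum.swap)
    also have "\<dots> = (\<Sum>w\<in>UNIV. \<Sum>v\<in>UNIV. if d w = (\<not> b) then \<beta> w v else 0)"
      by (intro sum.cong refl) (metis wf_sym[OF wb])
    also have "\<dots> = A (\<not> b)" unfolding A_def using ex by simp
    finally show ?thesis .
  qed
  have tot: "A b + A (\<not> b) = 1"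
  proof -
    have "A b + A (\<not> b) = (\<Sum>v\<in>UNIV. deg \<beta> v)"
      unfolding A_def by (simp add: sum.distrib[symmetric]) (rule sum.cong, auto)
    then show ?thesis using wf_deg_sum[OF wb] by simp
  qed
  show ?thesis using eq[of b] tot unfolding A_def by simp
qed



lemma bip_joining:
  fixes \<alpha> :: "'a::finite \<Rightarrow> 'a \<Rightarrow> real" and \<beta> :: "'b::finite \<Rightarrow> 'b \<Rightarrow> real"
    and c :: "'a \<Rightarrow> bool" and d :: "'b \<Rightarrow> bool"
  assumes wa: "weight_fun \<alpha>" and wb: "weight_fun \<beta>"
    and c: "\<forall>u w. \<alpha> u w > 0 \<longrightarrow> c u \<noteq> c w"
    and d: "\<forall>v w. \<beta> v w > 0 \<longrightarrow> d v \<noteq> d w"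
  shows "weight_joining \<alpha> \<beta> (\<lambda>x y. if c (fst x) = d (snd x) then 2 * tensor \<alpha> \<beta> x y else 0)"
proof -
  define \<gamma> where "\<gamma> = (\<lambda>x y. if c (fst x) = d (snd x) then 2 * tensor \<alpha> \<beta> x y else 0)"
  have gv: "\<gamma> (u,v) (u',v') = (if c u = d v then 2 * (\<alpha> u u' * \<beta> v v') else 0)" for u v u' v'
    by (simp add: \<gamma>_def tensor_def)
  have rowv: "(\<Sum>v'\<in>UNIV. \<gamma> (u,v) (u',v')) = (if c u = d v then 2 * (\<alpha> u u' * deg \<beta> v) else 0)" for u v u'
    by (simp add: gv deg_def sum_distrib_left)
  have rowu: "(\<Sum>u'\<in>UNIV. \<gamma> (u,v) (u',v')) = (if c u = d v then 2 * (deg \<alpha> u * \<beta> v v') else 0)" for u v v'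
  proof (cases "c u = d v")
    case True
    then have "(\<Sum>u'\<in>UNIV. \<gamma> (u,v) (u',v')) = (\<Sum>u'\<in>UNIV. (2 * \<beta> v v') * \<alpha> u u')"
      by (simp add: gv mult_ac)
    also have "\<dots> = (2 * \<beta> v v') * deg \<alpha> u" by (simp add: deg_def sum_distrib_left)
    finally show ?thesis using True by simp
  next
    case False then show ?thesis by (simp add: gv)
  qed
  have dg: "deg \<gamma> (u,v) = (if c u = d v then 2 * (deg \<alpha> u * deg \<beta> v) else 0)" for u v
  proof -
    have "deg \<gamma> (u,v) = (\<Sum>u'\<in>UNIV. \<Sum>v'\<in>UNIV. \<gamma> (u,v) (u',v'))"
      by (simp add: deg_def sumP)
    also have "\<dots> = (\<Sum>u'\<in>UNIV. if c u = d v then 2 * (\<alpha> u u' * deg \<beta> v) else 0)" by (simp add: rowv)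
    also have "\<dots> = (if c u = d v then (2 * deg \<beta> v) * (\<Sum>u'\<in>UNIV. \<alpha> u u') else 0)"
      by (cases "c u = d v") (simp_all add: sum_distrib_left mult_ac)
    also have "\<dots> = (if c u = d v then 2 * (deg \<alpha> u * deg \<beta> v) else 0)"
      by (simp add: deg_def)
    finally show ?thesis .
  qed
  have m1: "(\<Sum>v\<in>UNIV. deg \<gamma> (u,v)) = deg \<alpha> u" for u
  proof -
    have "(\<Sum>v\<in>UNIV. deg \<gamma> (u,v)) = (\<Sum>v\<in>UNIV. 2 * deg \<alpha> u * (if d v = c u then deg \<beta> v else 0))"
      by (intro sum.cong refl) (auto simp: dg)
    also have "\<dots> = 2 * deg \<alpha> u * (\<Sum>v\<in>UNIV. if d v = c u then deg \<beta> v else 0)"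
      by (simp add: sum_distrib_left)
    also have "\<dots> = deg \<alpha> u" using half[OF wb d, of "c u"] by simp
    finally show ?thesis .
  qed
  have m2: "(\<Sum>u\<in>UNIV. deg \<gamma> (u,v)) = deg \<beta> v" for v
  proof -
    have "(\<Sum>u\<in>UNIV. deg \<gamma> (u,v)) = (\<Sum>u\<in>UNIV. 2 * deg \<beta> v * (if c u = d v then deg \<alpha> u else 0))"
      by (intro sum.cong refl) (auto simp: dg)
    also have "\<dots> = 2 * deg \<beta> v * (\<Sum>u\<in>UNIV. if c u = d v then deg \<alpha> u else 0)"
      by (simp add: sum_distrib_left)
    also have "\<dots> = deg \<beta> v" using half[OF wa c, of "d v"] by simp
    finally show ?thesis .
  qed
  have wg: "weight_fun \<gamma>"
    unfolding weight_fun_def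
  proof (intro conjI allI)
    fix x y show "\<gamma> x y \<ge> 0" 
      using wf_nonneg[OF wa] wf_nonneg[OF wb] by (simp add: \<gamma>_def tensor_def)
  next
    fix x y :: "'a \<times> 'b"
    obtain u v where x: "x = (u,v)" by fastforce
    obtain u' v' where y: "y = (u',v')" by fastforce
    show "\<gamma> x y = \<gamma> y x"
    proof (cases "\<alpha> u u' > 0 \<and> \<beta> v v' > 0")
      case True
      then have "c u \<noteq> c u'" "d v \<noteq> d v'" using c d by auto
      then have "(c u = d v) = (c u' = d v')" by auto
      then show ?thesis unfolding x y gv using wf_sym[OF wa, of u u'] wf_sym[OF wb, of v v'] by simp
    next
      case False
      then have "\<alpha> u u' = 0 \<or> \<beta> v v' = 0"
        using wf_nonneg[OF wa, of u u'] wf_nonneg[OF wb, of v v'] by auto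
      then show ?thesis unfolding x y gv using wf_sym[OF wa, of u u'] wf_sym[OF wb, of v v'] by auto
    qed
  next
    have "(\<Sum>x\<in>UNIV. \<Sum>y\<in>UNIV. \<gamma> x y) = (\<Sum>x\<in>UNIV. deg \<gamma> x)" by (simp add: deg_def)
    also have "\<dots> = (\<Sum>u\<in>UNIV. deg \<alpha> u)" by (simp add: sumP m1)
    also have "\<dots> = 1" using wf_deg_sum[OF wa] .
    finally show "(\<Sum>x\<in>UNIV. \<Sum>y\<in>UNIV. \<gamma> x y) = 1" .
  qed
  have "weight_joining \<alpha> \<beta> \<gamma>"
    unfolding weight_joining_def
    using wg m1 m2 by (simp add: dg rowv rowu)
  then show ?thesis by (simp add: \<gamma>_def)
qed

definition flow :: "'a list \<Rightarrow> 'a \<Rightarrow> 'a \<Rightarrow> real" where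
  "flow vs u w = (if \<exists>i<length vs. u = vs!i \<and> w = vs!((i+1) mod length vs) then 1 else 0)
     - (if \<exists>i<length vs. w = vs!i \<and> u = vs!((i+1) mod length vs) then 1 else 0)"

lemma flow_anti: "flow vs w u = - flow vs u w" by (simp add: flow_def)
lemma flow_bound: "\<bar>flow vs u w\<bar> \<le> 1" by (simp add: flow_def)
lemma flow_supp:
  assumes "cycE E vs" "flow vs u w \<noteq> 0" shows "E u w \<or> E w u"
proof -
  have "(\<exists>i<length vs. u = vs!i \<and> w = vs!((i+1) mod length vs)) \<or>
        (\<exists>i<length vs. w = vs!i \<and> u = vs!((i+1) mod length vs))"
    using assms(2) unfolding flow_def by (auto split: if_splits)
  then show ?thesis using assms(1) unfolding cycE_def by blast
qed

lemma pred_idx: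
  fixes i n k :: nat
  assumes "i < n" "k < n"
  shows "k = (i+1) mod n \<longleftrightarrow> i = (if k = 0 then n - 1 else k - 1)"
proof (cases "i + 1 < n")
  case True
  then have m: "(i+1) mod n = i+1" by simp
  show ?thesis unfolding m using True assms by (cases "k = 0") auto
next
  case False then have e: "i + 1 = n" using assms by simp
  then have m: "(i+1) mod n = 0" by simp
  show ?thesis unfolding m using e assms by (cases "k = 0") auto
qed

lemma succ_sum:
  fixes vs :: "'a::finite list"
  assumes dist: "distinct vs"
  shows "(\<Sum>w\<in>UNIV. if \<exists>i<length vs. u = vs!i \<and> w = vs!((i+1) mod length vs) then 1 else 0)
     = (if u \<in> set vs then 1 else (0::real))"
proof (cases "u \<in> set vs")
  case True
  then obtain k where k: "k < length vs" "u = vs!k" by (metis in_set_conv_nth)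
  have "(\<exists>i<length vs. u = vs!i \<and> w = vs!((i+1) mod length vs)) \<longleftrightarrow> w = vs!((k+1) mod length vs)" for w
    using k dist by (metis nth_eq_iff_index_eq)
  then have "(\<Sum>w\<in>UNIV. if \<exists>i<length vs. u = vs!i \<and> w = vs!((i+1) mod length vs) then 1 else (0::real))
     = (\<Sum>w\<in>UNIV. if w = vs!((k+1) mod length vs) then 1 else 0)" by simp
  also have "\<dots> = 1" by simp
  finally show ?thesis using True by simp
next
  case False
  have "(\<Sum>w\<in>UNIV. if \<exists>i<length vs. u = vs!i \<and> w = vs!((i+1) mod length vs) then 1 else (0::real)) = 0"
  proof (rule sum.neutral, intro ballI)
    fix w
    have "\<not> (\<exists>i<length vs. u = vs!i \<and> w = vs!((i+1) mod length vs))" using False nth_mem by blast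
    then show "(if \<exists>i<length vs. u = vs!i \<and> w = vs!((i+1) mod length vs) then 1 else (0::real)) = 0"
      by (rule if_not_P)
  qed
  then show ?thesis using False by simp
qed

lemma pred_sum:
  fixes vs :: "'a::finite list"
  assumes dist: "distinct vs"
  shows "(\<Sum>w\<in>UNIV. if \<exists>i<length vs. w = vs!i \<and> u = vs!((i+1) mod length vs) then 1 else 0)
     = (if u \<in> set vs then 1 else (0::real))"
proof (cases "u \<in> set vs")
  case True
  then obtain k where k: "k < length vs" "u = vs!k" by (metis in_set_conv_nth)
  define i0 where "i0 = (if k = 0 then length vs - 1 else k - 1)"
  have i0: "i0 < length vs" using k unfolding i0_def by auto
  have "(\<exists>i<length vs. w = vs!i \<and> u = vs!((i+1) mod length vs)) \<longleftrightarrow> w = vs!i0" for w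
  proof
    assume "\<exists>i<length vs. w = vs!i \<and> u = vs!((i+1) mod length vs)"
    then obtain i where i: "i < length vs" "w = vs!i" "u = vs!((i+1) mod length vs)" by blast
    have "(i+1) mod length vs < length vs" using i(1) by (intro mod_less_divisor) linarith
    then have "k = (i+1) mod length vs" using i k dist by (metis nth_eq_iff_index_eq)
    then have "i = i0" using pred_idx[OF i(1) k(1)] unfolding i0_def by simp
    then show "w = vs!i0" using i by simp
  next
    assume "w = vs!i0"
    moreover have "k = (i0+1) mod length vs" using pred_idx[OF i0 k(1)] unfolding i0_def by simp
    ultimately show "\<exists>i<length vs. w = vs!i \<and> u = vs!((i+1) mod length vs)" using i0 k by blast
  qed
  then have "(\<Sum>w\<in>UNIV. if \<exists>i<length vs. w = vs!i \<and> u = vs!((i+1) mod length vs) then 1 else (0::real))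
     = (\<Sum>w\<in>UNIV. if w = vs!i0 then 1 else 0)" by simp
  also have "\<dots> = 1" by simp
  finally show ?thesis using True by simp
next
  case False
  have "(\<Sum>w\<in>UNIV. if \<exists>i<length vs. w = vs!i \<and> u = vs!((i+1) mod length vs) then 1 else (0::real)) = 0"
  proof (rule sum.neutral, intro ballI)
    fix w
    have "\<not> (\<exists>i<length vs. w = vs!i \<and> u = vs!((i+1) mod length vs))"
    proof
      assume "\<exists>i<length vs. w = vs!i \<and> u = vs!((i+1) mod length vs)"
      then obtain i where i: "i < length vs" "u = vs!((i+1) mod length vs)" by blast
      have "(i+1) mod length vs < length vs" using i(1) by (intro mod_less_divisor) linarith
      then have "u \<in> set vs" unfolding i(2) by (rule nth_mem)
      then show False using False by contradiction
    qed
    then show "(if \<exists>i<length vs. w = vs!i \<and> u = vs!((i+1) mod length vs) then 1 else (0::real)) = 0"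
      by (rule if_not_P)
  qed
  then show ?thesis using False by simp
qed

lemma flow_sum:
  fixes vs :: "'a::finite list"
  assumes "distinct vs" shows "(\<Sum>w\<in>UNIV. flow vs u w) = 0"
  unfolding flow_def sum_subtractf using succ_sum[OF assms] pred_sum[OF assms] by simp

lemma flow_one:
  assumes "cycE E vs" shows "flow vs (vs!0) (vs!1) = 1"
proof -
  have l: "length vs \<ge> 3" "distinct vs" using assms unfolding cycE_def by auto
  have a: "\<exists>i<length vs. vs!0 = vs!i \<and> vs!1 = vs!((i+1) mod length vs)"
    using l by (intro exI[of _ 0]) auto
  have b: "\<not> (\<exists>i<length vs. vs!1 = vs!i \<and> vs!0 = vs!((i+1) mod length vs))"
  proof
    assume "\<exists>i<length vs. vs!1 = vs!i \<and> vs!0 = vs!((i+1) mod length vs)"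
    then obtain i where i: "i < length vs" "vs!1 = vs!i" "vs!0 = vs!((i+1) mod length vs)" by blast
    have "i = 1" using i l nth_eq_iff_index_eq[of vs 1 i] by simp
    then have "(i+1) mod length vs = 2" using l by simp
    then have "vs!0 = vs!2" using i by simp
    moreover have "0 < length vs" "2 < length vs" using l by auto
    ultimately show False using nth_eq_iff_index_eq[OF l(2)] by fastforce
  qed
  show ?thesis unfolding flow_def using a b by simp
qed



lemma forest_iff:
  assumes "no_self_loops \<alpha>"
  shows "forest \<alpha> \<longleftrightarrow> \<not> (\<exists>vs. cycE (\<lambda>u w. \<alpha> u w > 0) vs)"
  using assms unfolding forest_def has_cycle_def no_self_loops_def cycE_def by blast

lemma joining_facts:
  fixes \<alpha> :: "'a::finite \<Rightarrow> 'a \<Rightarrow> real" and \<beta> :: "'b::finite \<Rightarrow> 'b \<Rightarrow> real"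
  assumes fa: "fully_supported \<alpha>" and fb: "fully_supported \<beta>"
    and wd: "weakly_disjoint \<alpha> \<beta>" and wj: "weight_joining \<alpha> \<beta> \<gamma>"
  shows "(\<Sum>v'\<in>UNIV. \<gamma> (u,v) (u',v')) = \<alpha> u u' * deg \<beta> v"
    and "(\<Sum>u'\<in>UNIV. \<gamma> (u,v) (u',v')) = \<beta> v v' * deg \<alpha> u"
proof -
  have r: "deg \<gamma> (u,v) = deg \<alpha> u * deg \<beta> v" using wd wj unfolding weakly_disjoint_def by blast
  have pa: "deg \<alpha> u > 0" using fa unfolding fully_supported_def by blast
  have pb: "deg \<beta> v > 0" using fb unfolding fully_supported_def by blast
  have "deg \<alpha> u * (\<Sum>v'\<in>UNIV. \<gamma> (u,v) (u',v')) = \<alpha> u u' * deg \<gamma> (u,v)"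
    using wj unfolding weight_joining_def by blast
  then have "deg \<alpha> u * (\<Sum>v'\<in>UNIV. \<gamma> (u,v) (u',v')) = deg \<alpha> u * (\<alpha> u u' * deg \<beta> v)"
    using r by simp
  then show "(\<Sum>v'\<in>UNIV. \<gamma> (u,v) (u',v')) = \<alpha> u u' * deg \<beta> v" using pa by simp
  have "deg \<beta> v * (\<Sum>u'\<in>UNIV. \<gamma> (u,v) (u',v')) = \<beta> v v' * deg \<gamma> (u,v)"
    using wj unfolding weight_joining_def by blast
  then have "deg \<beta> v * (\<Sum>u'\<in>UNIV. \<gamma> (u,v) (u',v')) = deg \<beta> v * (\<beta> v v' * deg \<alpha> u)"
    using r by simp
  then show "(\<Sum>u'\<in>UNIV. \<gamma> (u,v) (u',v')) = \<beta> v v' * deg \<alpha> u" using pb by simp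
qed

lemma forest_strong_a:
  fixes \<alpha> :: "'a::finite \<Rightarrow> 'a \<Rightarrow> real" and \<beta> :: "'b::finite \<Rightarrow> 'b \<Rightarrow> real"
  assumes wa: "weight_fun \<alpha>" and wb: "weight_fun \<beta>"
    and fa: "fully_supported \<alpha>" and fb: "fully_supported \<beta>"
    and na: "no_self_loops \<alpha>" and fo: "forest \<alpha>" and wd: "weakly_disjoint \<alpha> \<beta>"
  shows "strongly_disjoint \<alpha> \<beta>"
  unfolding strongly_disjoint_def
proof (intro allI impI)
  fix \<gamma> assume wj: "weight_joining \<alpha> \<beta> \<gamma>"
  have wg: "weight_fun \<gamma>" using wj unfolding weight_joining_def by blast
  note J = joining_facts[OF fa fb wd wj]
  define D where "D u w c = \<gamma> (u, fst c) (w, snd c) - \<alpha> u w * \<beta> (fst c) (snd c)"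
    for u w and c :: "'b \<times> 'b"
  have Z: "D u w c = 0" for u w c
  proof (rule forest_zero[of \<alpha> D])
    show "\<forall>u. \<not> \<alpha> u u > 0" using na unfolding no_self_loops_def by blast
    show "\<not> (\<exists>vs. cycE (\<lambda>u w. \<alpha> u w > 0) vs)" using forest_iff[OF na] fo by blast
    show "\<forall>u w c. \<not> \<alpha> u w > 0 \<longrightarrow> D u w c = 0"
    proof (intro allI impI)
      fix u w and c :: "'b \<times> 'b"
      assume "\<not> \<alpha> u w > 0"
      then have a0: "\<alpha> u w = 0" using wf_nonneg[OF wa, of u w] by simp
      then have "(\<Sum>v'\<in>UNIV. \<gamma> (u, fst c) (w, v')) = 0" using J(1) by simp
      then have "\<forall>v'\<in>UNIV. \<gamma> (u, fst c) (w, v') = 0"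
        using sum_nonneg_eq_0_iff[of UNIV "\<lambda>v'. \<gamma> (u, fst c) (w, v')"] wf_nonneg[OF wg] by simp
      then show "D u w c = 0" unfolding D_def using a0 by simp
    qed
    show "\<forall>u w c. D u w c \<noteq> 0 \<longrightarrow> (\<exists>c'. D w u c' \<noteq> 0)"
    proof (intro allI impI)
      fix u w and c :: "'b \<times> 'b"
      assume "D u w c \<noteq> 0"
      moreover have "D w u (snd c, fst c) = D u w c"
        unfolding D_def using wf_sym[OF wg, of "(u, fst c)" "(w, snd c)"]
          wf_sym[OF wa, of u w] wf_sym[OF wb, of "fst c" "snd c"] by simp
      ultimately show "\<exists>c'. D w u c' \<noteq> 0" by (intro exI[of _ "(snd c, fst c)"]) simp
    qed
    show "\<forall>u c. (\<Sum>w\<in>UNIV. D u w c) = 0"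
    proof (intro allI)
      fix u and c :: "'b \<times> 'b"
      have "(\<Sum>w\<in>UNIV. D u w c) = (\<Sum>w\<in>UNIV. \<gamma> (u, fst c) (w, snd c)) - (\<Sum>w\<in>UNIV. \<alpha> u w) * \<beta> (fst c) (snd c)"
        unfolding D_def by (simp add: sum_subtractf sum_distrib_right)
      then show "(\<Sum>w\<in>UNIV. D u w c) = 0" using J(2) by (simp add: deg_def)
    qed
  qed
  show "\<gamma> = tensor \<alpha> \<beta>"
  proof (intro ext)
    fix x y :: "'a \<times> 'b"
    obtain u v where x: "x = (u,v)" by fastforce
    obtain u' v' where y: "y = (u',v')" by fastforce
    show "\<gamma> x y = tensor \<alpha> \<beta> x y" using Z[of u u' "(v,v')"] unfolding x y D_def tensor_def by simp
  qed
qed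

lemma forest_strong_b:
  fixes \<alpha> :: "'a::finite \<Rightarrow> 'a \<Rightarrow> real" and \<beta> :: "'b::finite \<Rightarrow> 'b \<Rightarrow> real"
  assumes wa: "weight_fun \<alpha>" and wb: "weight_fun \<beta>"
    and fa: "fully_supported \<alpha>" and fb: "fully_supported \<beta>"
    and nb: "no_self_loops \<beta>" and fo: "forest \<beta>" and wd: "weakly_disjoint \<alpha> \<beta>"
  shows "strongly_disjoint \<alpha> \<beta>"
  unfolding strongly_disjoint_def
proof (intro allI impI)
  fix \<gamma> assume wj: "weight_joining \<alpha> \<beta> \<gamma>"
  have wg: "weight_fun \<gamma>" using wj unfolding weight_joining_def by blast
  note J = joining_facts[OF fa fb wd wj]
  define D where "D v w c = \<gamma> (fst c, v) (snd c, w) - \<alpha> (fst c) (snd c) * \<beta> v w"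
    for v w and c :: "'a \<times> 'a"
  have Z: "D v w c = 0" for v w c
  proof (rule forest_zero[of \<beta> D])
    show "\<forall>u. \<not> \<beta> u u > 0" using nb unfolding no_self_loops_def by blast
    show "\<not> (\<exists>vs. cycE (\<lambda>u w. \<beta> u w > 0) vs)" using forest_iff[OF nb] fo by blast
    show "\<forall>u w c. \<not> \<beta> u w > 0 \<longrightarrow> D u w c = 0"
    proof (intro allI impI)
      fix u w and c :: "'a \<times> 'a"
      assume "\<not> \<beta> u w > 0"
      then have a0: "\<beta> u w = 0" using wf_nonneg[OF wb, of u w] by simp
      then have "(\<Sum>u'\<in>UNIV. \<gamma> (fst c, u) (u', w)) = 0" using J(2) by simp
      then have "\<forall>u'\<in>UNIV. \<gamma> (fst c, u) (u', w) = 0"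
        using sum_nonneg_eq_0_iff[of UNIV "\<lambda>u'. \<gamma> (fst c, u) (u', w)"] wf_nonneg[OF wg] by simp
      then show "D u w c = 0" unfolding D_def using a0 by simp
    qed
    show "\<forall>u w c. D u w c \<noteq> 0 \<longrightarrow> (\<exists>c'. D w u c' \<noteq> 0)"
    proof (intro allI impI)
      fix u w and c :: "'a \<times> 'a"
      assume "D u w c \<noteq> 0"
      moreover have "D w u (snd c, fst c) = D u w c"
        unfolding D_def using wf_sym[OF wg, of "(fst c, u)" "(snd c, w)"]
          wf_sym[OF wa, of "fst c" "snd c"] wf_sym[OF wb, of u w] by simp
      ultimately show "\<exists>c'. D w u c' \<noteq> 0" by (intro exI[of _ "(snd c, fst c)"]) simp
    qed
    show "\<forall>u c. (\<Sum>w\<in>UNIV. D u w c) = 0"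
    proof (intro allI)
      fix u and c :: "'a \<times> 'a"
      have "(\<Sum>w\<in>UNIV. D u w c) = (\<Sum>w\<in>UNIV. \<gamma> (fst c, u) (snd c, w)) - \<alpha> (fst c) (snd c) * (\<Sum>w\<in>UNIV. \<beta> u w)"
        unfolding D_def by (simp add: sum_subtractf sum_distrib_left)
      then show "(\<Sum>w\<in>UNIV. D u w c) = 0" using J(1) by (simp add: deg_def)
    qed
  qed
  show "\<gamma> = tensor \<alpha> \<beta>"
  proof (intro ext)
    fix x y :: "'a \<times> 'b"
    obtain u v where x: "x = (u,v)" by fastforce
    obtain u' v' where y: "y = (u',v')" by fastforce
    show "\<gamma> x y = tensor \<alpha> \<beta> x y" using Z[of v v' "(u,u')"] unfolding x y D_def tensor_def by simp
  qed
qed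

lemma pos_min:
  fixes f :: "'a::finite \<Rightarrow> real"
  shows "\<exists>\<epsilon>>0. \<forall>x. f x > 0 \<longrightarrow> \<epsilon> \<le> f x"
proof (cases "\<exists>x. f x > 0")
  case False then show ?thesis by (intro exI[of _ 1]) auto
next
  case True
  define S where "S = f ` {x. f x > 0}"
  have fin: "finite S" "S \<noteq> {}" using True unfolding S_def by auto
  have "Min S > 0" using Min_in[OF fin] unfolding S_def by auto
  moreover have "\<forall>x. f x > 0 \<longrightarrow> Min S \<le> f x" using Min_le[OF fin(1)] unfolding S_def by auto
  ultimately show ?thesis by blast
qed

lemma cyc_not_strong:
  fixes \<alpha> :: "'a::finite \<Rightarrow> 'a \<Rightarrow> real" and \<beta> :: "'b::finite \<Rightarrow> 'b \<Rightarrow> real"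
  assumes wa: "weight_fun \<alpha>" and wb: "weight_fun \<beta>"
    and cs: "cycE (\<lambda>u w. \<alpha> u w > 0) cs" and ds: "cycE (\<lambda>u w. \<beta> u w > 0) ds"
  shows "\<not> strongly_disjoint \<alpha> \<beta>"
proof
  assume S: "strongly_disjoint \<alpha> \<beta>"
  define \<delta> where "\<delta> x y = flow cs (fst x) (fst y) * flow ds (snd x) (snd y)" for x y :: "'a \<times> 'b"
  obtain \<epsilon> where ep: "\<epsilon> > 0" "\<forall>z. (\<lambda>(x,y). tensor \<alpha> \<beta> x y) z > 0 \<longrightarrow> \<epsilon> \<le> (\<lambda>(x,y). tensor \<alpha> \<beta> x y) z"
    using pos_min by blast
  have dcs: "distinct cs" using cs unfolding cycE_def by blast
  have dds: "distinct ds" using ds unfolding cycE_def by blast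
  have nn: "\<forall>x y. tensor \<alpha> \<beta> x y + \<epsilon> * \<delta> x y \<ge> 0"
  proof (intro allI)
    fix x y :: "'a \<times> 'b"
    obtain u v where x: "x = (u,v)" by fastforce
    obtain u' v' where y: "y = (u',v')" by fastforce
    have t0: "tensor \<alpha> \<beta> x y \<ge> 0" unfolding tensor_def using wf_nonneg[OF wa] wf_nonneg[OF wb] by simp
    show "tensor \<alpha> \<beta> x y + \<epsilon> * \<delta> x y \<ge> 0"
    proof (cases "\<delta> x y = 0")
      case True then show ?thesis using t0 by simp
    next
      case False
      then have f1: "flow cs u u' \<noteq> 0" and f2: "flow ds v v' \<noteq> 0" unfolding \<delta>_def x y by auto
      have "\<alpha> u u' > 0" using flow_supp[OF cs f1] wf_sym[OF wa, of u u'] by auto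
      moreover have "\<beta> v v' > 0" using flow_supp[OF ds f2] wf_sym[OF wb, of v v'] by auto
      ultimately have "tensor \<alpha> \<beta> x y > 0" unfolding tensor_def x y by simp
      then have "\<epsilon> \<le> tensor \<alpha> \<beta> x y" using ep(2)[rule_format, of "(x,y)"] by simp
      moreover have "\<bar>\<delta> x y\<bar> \<le> 1" unfolding \<delta>_def abs_mult
        using flow_bound[of cs] flow_bound[of ds] by (simp add: mult_le_one)
      then have "-1 \<le> \<delta> x y" by (simp add: abs_le_iff)
      then have "\<epsilon> * (-1) \<le> \<epsilon> * \<delta> x y" using ep(1) by (intro mult_left_mono) auto
      then have "\<epsilon> * \<delta> x y \<ge> - \<epsilon>" by simp
      ultimately show ?thesis by simp
    qed
  qed
  have sd: "\<forall>x y. \<delta> x y = \<delta> y x"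
  proof (intro allI)
    fix x y :: "'a \<times> 'b"
    show "\<delta> x y = \<delta> y x" unfolding \<delta>_def
      using flow_anti[of cs "fst x" "fst y"] flow_anti[of ds "snd x" "snd y"] by simp
  qed
  have s1: "\<forall>u v u'. (\<Sum>v'\<in>UNIV. \<delta> (u,v) (u',v')) = 0"
    unfolding \<delta>_def by (simp add: sum_distrib_left[symmetric] flow_sum[OF dds])
  have s2: "\<forall>u v v'. (\<Sum>u'\<in>UNIV. \<delta> (u,v) (u',v')) = 0"
    unfolding \<delta>_def by (simp add: sum_distrib_right[symmetric] flow_sum[OF dcs])
  have "weight_joining \<alpha> \<beta> (\<lambda>x y. tensor \<alpha> \<beta> x y + \<epsilon> * \<delta> x y)"
    by (rule perturb_joining[OF wa wb nn sd s1 s2])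
  then have "(\<lambda>x y. tensor \<alpha> \<beta> x y + \<epsilon> * \<delta> x y) = tensor \<alpha> \<beta>"
    using S unfolding strongly_disjoint_def by blast
  then have "\<forall>x y. \<epsilon> * \<delta> x y = 0" by (simp add: fun_eq_iff)
  then have "\<epsilon> * \<delta> (cs!0, ds!0) (cs!1, ds!1) = 0" by blast
  moreover have "\<delta> (cs!0, ds!0) (cs!1, ds!1) = 1" unfolding \<delta>_def using flow_one[OF cs] flow_one[OF ds] by simp
  ultimately show False using ep(1) by simp
qed

lemma forests_not_strong:
  fixes \<alpha> :: "'a::finite \<Rightarrow> 'a \<Rightarrow> real" and \<beta> :: "'b::finite \<Rightarrow> 'b \<Rightarrow> real"
  assumes wa: "weight_fun \<alpha>" and wb: "weight_fun \<beta>"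
    and na: "no_self_loops \<alpha>" and nb: "no_self_loops \<beta>"
    and foa: "forest \<alpha>" and fob: "forest \<beta>"
  shows "\<not> strongly_disjoint \<alpha> \<beta>"
proof
  assume S: "strongly_disjoint \<alpha> \<beta>"
  have i1: "\<forall>x. \<not> (\<lambda>u w. \<alpha> u w > 0) x x" using na unfolding no_self_loops_def by blast
  have s1: "\<forall>x y. (\<lambda>u w. \<alpha> u w > 0) x y \<longrightarrow> (\<lambda>u w. \<alpha> u w > 0) y x" using wf_sym[OF wa] by simp
  have n1: "\<not> (\<exists>vs. cycE (\<lambda>u w. \<alpha> u w > 0) vs)" using forest_iff[OF na] foa by blast
  obtain c :: "'a \<Rightarrow> bool" where c: "\<forall>u w. \<alpha> u w > 0 \<longrightarrow> c u \<noteq> c w"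
    using coloring[OF i1 s1 n1] by blast
  have i2: "\<forall>x. \<not> (\<lambda>u w. \<beta> u w > 0) x x" using nb unfolding no_self_loops_def by blast
  have s2: "\<forall>x y. (\<lambda>u w. \<beta> u w > 0) x y \<longrightarrow> (\<lambda>u w. \<beta> u w > 0) y x" using wf_sym[OF wb] by simp
  have n2: "\<not> (\<exists>vs. cycE (\<lambda>u w. \<beta> u w > 0) vs)" using forest_iff[OF nb] fob by blast
  obtain d :: "'b \<Rightarrow> bool" where d: "\<forall>u w. \<beta> u w > 0 \<longrightarrow> d u \<noteq> d w"
    using coloring[OF i2 s2 n2] by blast
  define \<gamma> where "\<gamma> = (\<lambda>x y. if c (fst x) = d (snd x) then 2 * tensor \<alpha> \<beta> x y else 0)"
  have "weight_joining \<alpha> \<beta> \<gamma>" unfolding \<gamma>_def by (rule bip_joining[OF wa wb c d])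
  then have eq: "\<gamma> = tensor \<alpha> \<beta>" using S unfolding strongly_disjoint_def by blast
  obtain u u' where a: "\<alpha> u u' > 0" using wf_edge[OF wa] by blast
  obtain v v' where b: "\<beta> v v' > 0" using wf_edge[OF wb] by blast
  show False
  proof (cases "c u = d v")
    case False
    have "\<gamma> (u,v) (u',v') = 0" using False by (simp add: \<gamma>_def)
    moreover have "tensor \<alpha> \<beta> (u,v) (u',v') > 0" using a b by (simp add: tensor_def)
    ultimately show False using eq by simp
  next
    case True
    have "c u \<noteq> c u'" using c a by blast
    then have "c u' \<noteq> d v" using True by simp
    then have "\<gamma> (u',v) (u,v') = 0" by (simp add: \<gamma>_def)
    moreover have "\<alpha> u' u > 0" using a wf_sym[OF wa, of u u'] by simp
    then have "tensor \<alpha> \<beta> (u',v) (u,v') > 0" using b by (simp add: tensor_def)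
    ultimately show False using eq by simp
  qed
qed

theorem corollary5p6:
  fixes \<alpha> :: "'a::finite \<Rightarrow> 'a \<Rightarrow> real" and \<beta> :: "'b::finite \<Rightarrow> 'b \<Rightarrow> real"
  assumes "weight_fun \<alpha>" and "weight_fun \<beta>"
    and "fully_supported \<alpha>" and "fully_supported \<beta>"
    and "no_self_loops \<alpha>" and "no_self_loops \<beta>"
  shows "strongly_disjoint \<alpha> \<beta> \<longleftrightarrow>
           weakly_disjoint \<alpha> \<beta> \<and> (forest \<alpha> \<noteq> forest \<beta>)"
proof
  assume S: "strongly_disjoint \<alpha> \<beta>"
  have "forest \<alpha> \<noteq> forest \<beta>"
  proof
    assume eq: "forest \<alpha> = forest \<beta>"
    show False
    proof (cases "forest \<alpha>")
      case True
      then show False using forests_not_strong[OF assms(1,2,5,6)] eq S by simp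
    next
      case False
      then obtain cs where cs: "cycE (\<lambda>u w. \<alpha> u w > 0) cs" using forest_iff[OF assms(5)] by blast
      from False eq obtain ds where ds: "cycE (\<lambda>u w. \<beta> u w > 0) ds"
        using forest_iff[OF assms(6)] by blast
      show False using cyc_not_strong[OF assms(1,2) cs ds] S by simp
    qed
  qed
  then show "weakly_disjoint \<alpha> \<beta> \<and> (forest \<alpha> \<noteq> forest \<beta>)" using strong_weak[OF S] by simp
next
  assume W: "weakly_disjoint \<alpha> \<beta> \<and> (forest \<alpha> \<noteq> forest \<beta>)"
  then have "forest \<alpha> \<or> forest \<beta>" by blast
  then show "strongly_disjoint \<alpha> \<beta>"
  proof
    assume "forest \<alpha>"
    then show ?thesis using forest_strong_a[OF assms(1-4) assms(5)] W by blast
  next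
    assume "forest \<beta>"
    then show ?thesis using forest_strong_b[OF assms(1-4) assms(6)] W by blast
  qed
qed

end
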